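(* Assume (OP). Let $C\subseteq M$ be such that $C\setminus P$ is $\operatorname{dcl}$-independent over $P$, and let $X\subseteq M^n$ be a set which is $\mathcal L$-definable and also $C$-definable. Then $X$ is $\mathcal L_C$-definable.
   Context: Let $\mathcal M=\langle M,<,+,0,\dots\rangle$ be an o-minimal expansion of an ordered group with a distinguished positive element $1$, in a language $\mathcal L$; $\operatorname{dcl}$ denotes definable closure in $\mathcal M$; "$\mathcal L$-definable" means definable in $\mathcal M$ with parameters, "$\mathcal L_A$-definable" with parameters from $A$. Fix $P\subseteq M$ and let $\widetilde{\mathcal M}=\langle\mathcal M,P\rangle$ be the expansion by a unary predicate for $P$; "$A$-definable" (unqualified) means definable in $\widetilde{\mathcal M}$ with parameters from $A\subseteq M$. A set $A$ is $\operatorname{dcl}$-independent over $P$ if no $a\in A$ lies in $\operatorname{dcl}((A\setminus\{a\})\cup P)$. $M^n$ has the product order topology. (OP): for every $A\subseteq M$ with $A\setminus P$ $\operatorname{dcl}$-independent over $P$ and every $A$-definable $V\subseteq M^n$, the topological closure $\overline V$ is $\mathcal L_A$-definable. *)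

theory Defs
  imports Complex_Main
begin

text \<open>A (relational) first-order structure on the universe of type 'a is given by a
language L: a set of pairs (arity, interpretation). Function and constant symbols are
represented by their graphs (this does not change the definable sets).
Tuples in M^n are lists of length n.\<close>

text \<open>The 0-definable (parameter-free) sets of the structure, defined semantically as the
closure of the basic relations and equalities under Boolean operations, existential
projection and substitution of variables (i.e. the sets defined by first-order formulas).\<close>
inductive fodef :: "(nat \<times> 'a list set) set \<Rightarrow> nat \<Rightarrow> 'a list set \<Rightarrow> bool" for L where
  basic: "(n, R) \<in> L \<Longrightarrow> fodef L n (R \<inter> {xs. length xs = n})"
| eq: "i < n \<Longrightarrow> j < n \<Longrightarrow> fodef L n {xs. length xs = n \<and> xs ! i = xs ! j}"
| compl: "fodef L n S \<Longrightarrow> fodef L n ({xs. length xs = n} - S)"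
| inter: "fodef L n S \<Longrightarrow> fodef L n T \<Longrightarrow> fodef L n (S \<inter> T)"
| proj: "fodef L (Suc n) S \<Longrightarrow> fodef L n {xs. \<exists>y. xs @ [y] \<in> S}"
| subst: "fodef L m S \<Longrightarrow> (\<forall>i<m. f i < n) \<Longrightarrow>
    fodef L n {xs. length xs = n \<and> map (\<lambda>i. xs ! (f i)) [0..<m] \<in> S}"

definition definable_over :: "(nat \<times> 'a list set) set \<Rightarrow> 'a set \<Rightarrow> nat \<Rightarrow> 'a list set \<Rightarrow> bool" where
  "definable_over L A n X \<longleftrightarrow>
     (\<exists>m Y as. fodef L (n + m) Y \<and> length as = m \<and> set as \<subseteq> A \<and>
        X = {xs. length xs = n \<and> xs @ as \<in> Y})"

definition dcl :: "(nat \<times> 'a list set) set \<Rightarrow> 'a set \<Rightarrow> 'a set" where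
  "dcl L A = {b. definable_over L A 1 {[b]}}"

definition dcl_indep :: "(nat \<times> 'a list set) set \<Rightarrow> 'a set \<Rightarrow> 'a set \<Rightarrow> bool" where
  "dcl_indep L A P \<longleftrightarrow> (\<forall>a\<in>A. a \<notin> dcl L ((A - {a}) \<union> P))"

definition expand :: "(nat \<times> 'a list set) set \<Rightarrow> 'a set \<Rightarrow> (nat \<times> 'a list set) set" where
  "expand L P = insert (1, {[p] | p. p \<in> P}) L"

definition order_open :: "'a::linorder set \<Rightarrow> bool" where
  "order_open = generate_topology (range lessThan \<union> range greaterThan)"

definition prod_closure :: "nat \<Rightarrow> 'a::linorder list set \<Rightarrow> 'a list set" where
  "prod_closure n V = {x. length x = n \<and>
     (\<forall>U. (\<forall>i<n. order_open (U i) \<and> x ! i \<in> U i) \<longrightarrow> (\<exists>y\<in>V. \<forall>i<n. y ! i \<in> U i))}"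

definition interval_or_point :: "'a::linorder set \<Rightarrow> bool" where
  "interval_or_point S \<longleftrightarrow> (\<exists>a. S = {a}) \<or> (\<exists>a b. S = {a<..<b}) \<or> (\<exists>a. S = {a<..}) \<or>
      (\<exists>b. S = {..<b}) \<or> S = UNIV"

definition o_minimal :: "(nat \<times> 'a::linorder list set) set \<Rightarrow> bool" where
  "o_minimal L \<longleftrightarrow> (\<forall>X. definable_over L UNIV 1 X \<longrightarrow>
     (\<exists>F. finite F \<and> (\<forall>I\<in>F. interval_or_point I) \<and> {x. [x] \<in> X} = \<Union>F))"

definition omin_group_expansion :: "(nat \<times> 'a::linordered_ab_group_add list set) set \<Rightarrow> 'a \<Rightarrow> bool" where
  "omin_group_expansion L one \<longleftrightarrow> 0 < one \<and>
     (2, {[x, y] | x y. x < y}) \<in> L \<and>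
     (3, {[x, y, x + y] | x y. True}) \<in> L \<and>
     (1, {[0]}) \<in> L \<and> (1, {[one]}) \<in> L \<and> o_minimal L"

definition OP :: "(nat \<times> 'a::linorder list set) set \<Rightarrow> 'a set \<Rightarrow> bool" where
  "OP L P \<longleftrightarrow> (\<forall>A n V. dcl_indep L (A - P) P \<longrightarrow> definable_over (expand L P) A n V \<longrightarrow>
      definable_over L A n (prod_closure n V))"

end

theory Submission
  imports Defs
begin


lemma fodef_len: "fodef L n S \<Longrightarrow> xs \<in> S \<Longrightarrow> length xs = n"
  by (induction arbitrary: xs rule: fodef.induct) (fastforce+)

lemma fodef_mono: "fodef L n S \<Longrightarrow> L \<subseteq> L' \<Longrightarrow> fodef L' n S"
  by (induction rule: fodef.induct) (auto intro: fodef.intros)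

lemma def_len: "definable_over L A n X \<Longrightarrow> xs \<in> X \<Longrightarrow> length xs = n"
  by (auto simp: definable_over_def)

lemma def_mono: "definable_over L A n X \<Longrightarrow> L \<subseteq> L' \<Longrightarrow> A \<subseteq> A' \<Longrightarrow> definable_over L' A' n X"
  unfolding definable_over_def by (fastforce intro: fodef_mono)

lemma fodef_def: "fodef L n Y \<Longrightarrow> definable_over L A n Y"
  unfolding definable_over_def
  by (rule exI[of _ 0], rule exI[of _ Y], rule exI[of _ "[]"]) (auto dest: fodef_len)

lemma def_subst:
  assumes "definable_over L A m S" "\<forall>i<m. f i < n"
  shows "definable_over L A n {xs. length xs = n \<and> map (\<lambda>i. xs ! f i) [0..<m] \<in> S}"
proof -
  obtain k Y as where Y: "fodef L (m+k) Y" "length as = k" "set as \<subseteq> A"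
     "S = {ys. length ys = m \<and> ys @ as \<in> Y}" using assms(1) unfolding definable_over_def by blast
  define g where "g i = (if i < m then f i else n + (i - m))" for i
  have g: "\<forall>i<m+k. g i < n+k" using assms(2) by (auto simp: g_def)
  let ?Y = "{zs. length zs = n+k \<and> map (\<lambda>i. zs ! g i) [0..<m+k] \<in> Y}"
  have fY: "fodef L (n+k) ?Y" using fodef.subst[OF Y(1) g] .
  have eq: "map (\<lambda>i. (xs@as) ! g i) [0..<m+k] = map (\<lambda>i. xs ! f i) [0..<m] @ as" if "length xs = n" for xs
  proof (rule nth_equalityI)
    fix i assume "i < length (map (\<lambda>i. (xs@as) ! g i) [0..<m+k])"
    then have "i < m + k" by simp
    then show "map (\<lambda>i. (xs@as) ! g i) [0..<m+k] ! i = (map (\<lambda>i. xs ! f i) [0..<m] @ as) ! i"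
      using that assms(2) Y(2) by (auto simp: g_def nth_append)
  qed (use Y(2) in simp)
  show ?thesis unfolding definable_over_def
    apply (rule exI[of _ k], rule exI[of _ ?Y], rule exI[of _ as])
    using fY Y eq by auto
qed

lemma def_compl:
  assumes "definable_over L A n S"
  shows "definable_over L A n ({xs. length xs = n} - S)"
proof -
  obtain k Y as where Y: "fodef L (n+k) Y" "length as = k" "set as \<subseteq> A"
     "S = {ys. length ys = n \<and> ys @ as \<in> Y}" using assms(1) unfolding definable_over_def by blast
  have fY: "fodef L (n+k) ({xs. length xs = n+k} - Y)" using fodef.compl[OF Y(1)] .
  show ?thesis unfolding definable_over_def
    apply (rule exI[of _ k], rule exI[of _ "{xs. length xs = n+k} - Y"], rule exI[of _ as])
    using fY Y by auto
qed

lemma def_inter: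
  assumes "definable_over L A n S" "definable_over L A n T"
  shows "definable_over L A n (S \<inter> T)"
proof -
  obtain k1 Y as where Y: "fodef L (n+k1) Y" "length as = k1" "set as \<subseteq> A"
     "S = {ys. length ys = n \<and> ys @ as \<in> Y}" using assms(1) unfolding definable_over_def by blast
  obtain k2 Z bs where Z: "fodef L (n+k2) Z" "length bs = k2" "set bs \<subseteq> A"
     "T = {ys. length ys = n \<and> ys @ bs \<in> Z}" using assms(2) unfolding definable_over_def by blast
  define g where "g i = (if i < n then i else i + k1)" for i
  have g: "\<forall>i<n+k2. g i < n+(k1+k2)" by (auto simp: g_def)
  have g1: "\<forall>i<n+k1. id i < n+(k1+k2)" by auto
  let ?Y = "{zs. length zs = n+(k1+k2) \<and> map (\<lambda>i. zs ! id i) [0..<n+k1] \<in> Y}"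
  let ?Z = "{zs. length zs = n+(k1+k2) \<and> map (\<lambda>i. zs ! g i) [0..<n+k2] \<in> Z}"
  have fY: "fodef L (n+(k1+k2)) (?Y \<inter> ?Z)" using fodef.inter[OF fodef.subst[OF Y(1) g1] fodef.subst[OF Z(1) g]] .
  have e1: "map (\<lambda>i. (xs@as@bs) ! id i) [0..<n+k1] = xs @ as" if "length xs = n" for xs
    by (rule nth_equalityI) (use that Y(2) in \<open>auto simp: nth_append\<close>)
  have e2: "map (\<lambda>i. (xs@as@bs) ! g i) [0..<n+k2] = xs @ bs" if "length xs = n" for xs
    by (rule nth_equalityI) (use that Y(2) Z(2) in \<open>auto simp: nth_append g_def\<close>)
  show ?thesis unfolding definable_over_def
    apply (rule exI[of _ "k1+k2"], rule exI[of _ "?Y \<inter> ?Z"], rule exI[of _ "as@bs"])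
    using fY Y Z e1 e2 by auto
qed

lemma def_proj:
  assumes "definable_over L A (Suc n) S"
  shows "definable_over L A n {xs. \<exists>y. xs @ [y] \<in> S}"
proof -
  obtain k Y as where Y: "fodef L (Suc n+k) Y" "length as = k" "set as \<subseteq> A"
     "S = {ys. length ys = Suc n \<and> ys @ as \<in> Y}" using assms(1) unfolding definable_over_def by blast
  define g where "g i = (if i < n then i else if i = n then n + k else i - 1)" for i
  have g: "\<forall>i<Suc n+k. g i < Suc (n+k)" by (auto simp: g_def)
  let ?Y = "{zs. length zs = Suc (n+k) \<and> map (\<lambda>i. zs ! g i) [0..<Suc n+k] \<in> Y}"
  have fY: "fodef L (n+k) {xs. \<exists>y. xs @ [y] \<in> ?Y}" using fodef.proj[OF fodef.subst[OF Y(1) g]] .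
  have e: "map (\<lambda>i. (xs@as@[y]) ! g i) [0..<Suc n+k] = xs @ [y] @ as" if "length xs = n" for xs y
    by (rule nth_equalityI) (use that Y(2) in \<open>auto simp: nth_append g_def simp del: upt_Suc\<close>)
  show ?thesis unfolding definable_over_def
    apply (rule exI[of _ k], rule exI[of _ "{xs. \<exists>y. xs @ [y] \<in> ?Y}"], rule exI[of _ as])
    using fY Y e by auto
qed


datatype 'a fm = In "'a list set" "nat list" | Neg "'a fm" | Conj "'a fm" "'a fm" | Ex "'a fm"

fun ev :: "'a list \<Rightarrow> 'a fm \<Rightarrow> bool" where
  "ev xs (In S is) = (map (\<lambda>i. xs ! i) is \<in> S)"
| "ev xs (Neg \<phi>) = (\<not> ev xs \<phi>)"
| "ev xs (Conj \<phi> \<psi>) = (ev xs \<phi> \<and> ev xs \<psi>)"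
| "ev xs (Ex \<phi>) = (\<exists>y. ev (xs @ [y]) \<phi>)"

fun ok :: "(nat \<times> 'a list set) set \<Rightarrow> 'a set \<Rightarrow> nat \<Rightarrow> 'a fm \<Rightarrow> bool" where
  "ok L A n (In S is) = (definable_over L A (length is) S \<and> (\<forall>i\<in>set is. i < n))"
| "ok L A n (Neg \<phi>) = ok L A n \<phi>"
| "ok L A n (Conj \<phi> \<psi>) = (ok L A n \<phi> \<and> ok L A n \<psi>)"
| "ok L A n (Ex \<phi>) = ok L A (Suc n) \<phi>"

lemma map_nth_upt: "map (\<lambda>i. xs ! (is ! i)) [0..<length is] = map (\<lambda>i. xs ! i) is"
  by (rule nth_equalityI) auto

theorem fm_def: "ok L A n \<phi> \<Longrightarrow> definable_over L A n {xs. length xs = n \<and> ev xs \<phi>}"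
proof (induction \<phi> arbitrary: n)
  case (In S "is")
  then have "definable_over L A n {xs. length xs = n \<and> map (\<lambda>i. xs ! (is ! i)) [0..<length is] \<in> S}"
    by (intro def_subst) auto
  then show ?case by (simp add: map_nth_upt)
next
  case (Neg \<phi>)
  then have "definable_over L A n ({xs. length xs = n} - {xs. length xs = n \<and> ev xs \<phi>})"
    by (intro def_compl) auto
  moreover have "{xs. length xs = n} - {xs. length xs = n \<and> ev xs \<phi>} = {xs. length xs = n \<and> ev xs (Neg \<phi>)}"
    by auto
  ultimately show ?case by simp
next
  case (Conj \<phi> \<psi>)
  then have "definable_over L A n ({xs. length xs = n \<and> ev xs \<phi>} \<inter> {xs. length xs = n \<and> ev xs \<psi>})"
    by (intro def_inter) auto
  moreover have "{xs. length xs = n \<and> ev xs \<phi>} \<inter> {xs. length xs = n \<and> ev xs \<psi>} = {xs. length xs = n \<and> ev xs (Conj \<phi> \<psi>)}"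
    by auto
  ultimately show ?case by simp
next
  case (Ex \<phi>)
  then have "definable_over L A n {xs. \<exists>y. xs @ [y] \<in> {zs. length zs = Suc n \<and> ev zs \<phi>}}"
    by (intro def_proj) auto
  moreover have "{xs. \<exists>y. xs @ [y] \<in> {zs. length zs = Suc n \<and> ev zs \<phi>}} = {xs. length xs = n \<and> ev xs (Ex \<phi>)}"
    by auto
  ultimately show ?case by simp
qed

definition Tru :: "'a fm" where "Tru = In {[]} []"
definition Disj :: "'a fm \<Rightarrow> 'a fm \<Rightarrow> 'a fm" where "Disj \<phi> \<psi> = Neg (Conj (Neg \<phi>) (Neg \<psi>))"
definition Iff :: "'a fm \<Rightarrow> 'a fm \<Rightarrow> 'a fm" where "Iff \<phi> \<psi> = Disj (Conj \<phi> \<psi>) (Conj (Neg \<phi>) (Neg \<psi>))"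
fun ExN :: "nat \<Rightarrow> 'a fm \<Rightarrow> 'a fm" where
  "ExN 0 \<phi> = \<phi>"
| "ExN (Suc k) \<phi> = Ex (ExN k \<phi>)"

lemma def_nil: "definable_over L A 0 {[]}"
proof -
  have "fodef L 1 {xs. length xs = 1 \<and> xs ! 0 = xs ! 0}" by (rule fodef.eq) auto
  then have "fodef L 0 {xs. \<exists>y. xs @ [y] \<in> {xs. length xs = 1 \<and> xs ! 0 = xs ! 0}}"
    using fodef.proj[of L 0] by (simp only: One_nat_def)
  moreover have "{xs. \<exists>y. xs @ [y] \<in> {xs. length xs = 1 \<and> xs ! 0 = xs ! 0}} = {[]}" by auto
  ultimately show ?thesis using fodef_def by metis
qed

lemma ev_Tru[simp]: "ev xs Tru" and ok_Tru[simp]: "ok L A n Tru"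
  by (auto simp: Tru_def def_nil)

lemma ev_Disj[simp]: "ev xs (Disj \<phi> \<psi>) = (ev xs \<phi> \<or> ev xs \<psi>)"
  and ok_Disj[simp]: "ok L A n (Disj \<phi> \<psi>) = (ok L A n \<phi> \<and> ok L A n \<psi>)"
  by (auto simp: Disj_def)

lemma ev_Iff[simp]: "ev xs (Iff \<phi> \<psi>) = (ev xs \<phi> \<longleftrightarrow> ev xs \<psi>)"
  and ok_Iff[simp]: "ok L A n (Iff \<phi> \<psi>) = (ok L A n \<phi> \<and> ok L A n \<psi>)"
  by (auto simp: Iff_def)

lemma ev_ExN[simp]: "ev xs (ExN k \<phi>) = (\<exists>ys. length ys = k \<and> ev (xs @ ys) \<phi>)"
proof (induction k arbitrary: xs)
  case 0 then show ?case by simp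
next
  case (Suc k)
  show ?case
  proof
    assume "ev xs (ExN (Suc k) \<phi>)"
    then obtain y ys where "length ys = k" "ev (xs @ [y] @ ys) \<phi>" using Suc by auto
    then show "\<exists>ys. length ys = Suc k \<and> ev (xs @ ys) \<phi>" by (intro exI[of _ "y # ys"]) auto
  next
    assume "\<exists>ys. length ys = Suc k \<and> ev (xs @ ys) \<phi>"
    then obtain ys where "length ys = Suc k" "ev (xs @ ys) \<phi>" by blast
    then obtain y zs where "ys = y # zs" "length zs = k" by (cases ys) auto
    then show "ev xs (ExN (Suc k) \<phi>)" using Suc \<open>ev (xs @ ys) \<phi>\<close> by auto
  qed
qed

lemma ok_ExN[simp]: "ok L A n (ExN k \<phi>) = ok L A (n + k) \<phi>"
  by (induction k arbitrary: n) auto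

lemma def_basic: "(k, R) \<in> L \<Longrightarrow> R \<subseteq> {xs. length xs = k} \<Longrightarrow> definable_over L A k R"
proof -
  assume a: "(k, R) \<in> L" "R \<subseteq> {xs. length xs = k}"
  then have "R \<inter> {xs. length xs = k} = R" by blast
  then show ?thesis using fodef_def[OF fodef.basic[OF a(1)], of A] by simp
qed

lemma def_union:
  assumes "definable_over L A n S" "definable_over L A n T"
  shows "definable_over L A n (S \<union> T)"
proof -
  have "definable_over L A n {xs. length xs = n \<and> ev xs (Disj (In S [0..<n]) (In T [0..<n]))}"
    using assms by (intro fm_def) auto
  moreover have "{xs. length xs = n \<and> ev xs (Disj (In S [0..<n]) (In T [0..<n]))} = S \<union> T"
  proof -
    have m: "map (\<lambda>i. xs ! i) [0..<length xs] = xs" for xs :: "'a list" by (rule nth_equalityI) auto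
    have "ev xs (Disj (In S [0..<n]) (In T [0..<n])) \<longleftrightarrow> xs \<in> S \<or> xs \<in> T" if "length xs = n" for xs
      using that m[of xs] by simp
    then show ?thesis using def_len[OF assms(1)] def_len[OF assms(2)] by blast
  qed
  ultimately show ?thesis by simp
qed

lemma def_empty: "definable_over L A n {}"
proof -
  have "definable_over L A n {xs. length xs = n \<and> ev xs (Neg Tru)}" by (intro fm_def) auto
  then show ?thesis by simp
qed

lemma def_Union:
  assumes "finite \<F>" "\<forall>S\<in>\<F>. definable_over L A n S"
  shows "definable_over L A n (\<Union>\<F>)"
  using assms
proof (induction rule: finite_induct)
  case empty then show ?case using def_empty by simp
next
  case (insert S F) then show ?case using def_union[of L A n S "\<Union>F"] by simp
qed


definition cl :: "'a::linorder set \<Rightarrow> 'a set" where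
  "cl t = {x. \<forall>a b. a < x \<and> x < b \<longrightarrow> (\<exists>y\<in>t. a < y \<and> y < b)}"

definition lift :: "'a set \<Rightarrow> 'a list set" where "lift t = (\<lambda>x. [x]) ` t"

lemma oo_nbhd:
  fixes one :: "'a::linordered_ab_group_add" and U :: "'a set"
  assumes "order_open U" "x \<in> U" "0 < one"
  shows "\<exists>a b. a < x \<and> x < b \<and> {a<..<b} \<subseteq> U"
  using assms(1,2) unfolding order_open_def
proof (induction arbitrary: x rule: generate_topology.induct)
  case UNIV
  show ?case by (rule exI[of _ "x - one"], rule exI[of _ "x + one"]) (use assms(3) in auto)
next
  case (Int a b)
  then obtain a1 b1 a2 b2 where "a1 < x" "x < b1" "{a1<..<b1} \<subseteq> a" "a2 < x" "x < b2" "{a2<..<b2} \<subseteq> b"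
    by (meson IntD1 IntD2)
  then show ?case
    by (intro exI[of _ "max a1 a2"] exI[of _ "min b1 b2"]) auto
next
  case (UN K)
  then obtain k where "k \<in> K" "x \<in> k" by blast
  with UN show ?case by blast
next
  case (Basis s)
  then consider c where "s = {..<c}" | c where "s = {c<..}" by blast
  then show ?case
  proof cases
    case 1
    then show ?thesis using Basis assms(3)
      by (intro exI[of _ "x - one"] exI[of _ c]) auto
  next
    case 2
    then show ?thesis using Basis assms(3)
      by (intro exI[of _ c] exI[of _ "x + one"]) auto
  qed
qed

lemma oo_interval: "order_open {a<..<b}"
proof -
  have "{a<..<b} = {a<..} \<inter> {..<b}" by auto
  moreover have "generate_topology (range lessThan \<union> range greaterThan) ({a<..} \<inter> {..<b})"
    by (intro generate_topology.Int generate_topology.Basis) auto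
  ultimately show ?thesis unfolding order_open_def by simp
qed

lemma len1: "length xs = Suc 0 \<Longrightarrow> xs = [xs ! 0]"
  by (cases xs) auto

lemma closure_lift:
  fixes one :: "'a::linordered_ab_group_add" and t :: "'a set"
  assumes "0 < one"
  shows "prod_closure 1 (lift t) = lift (cl t)"
proof
  show "prod_closure 1 (lift t) \<subseteq> lift (cl t)"
  proof
    fix z assume z: "z \<in> prod_closure 1 (lift t)"
    then have "length z = Suc 0" by (simp add: prod_closure_def)
    then have zl: "z = [z ! 0]" by (rule len1)
    have "z ! 0 \<in> cl t" unfolding cl_def
    proof (intro CollectI allI impI)
      fix a b assume ab: "a < z ! 0 \<and> z ! 0 < b"
      have h1: "\<forall>i<1. order_open ((\<lambda>i. {a<..<b}) i) \<and> z ! i \<in> (\<lambda>i. {a<..<b}) i"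
        using ab oo_interval by auto
      have h2: "\<forall>U. (\<forall>i<1. order_open (U i) \<and> z ! i \<in> U i) \<longrightarrow> (\<exists>y\<in>lift t. \<forall>i<1. y ! i \<in> U i)"
        using z unfolding prod_closure_def by simp
      obtain y where "y \<in> lift t" "\<forall>i<1. y ! i \<in> {a<..<b}"
        using h2[rule_format, of "\<lambda>i. {a<..<b}", OF h1[rule_format]] by auto
      then show "\<exists>y\<in>t. a < y \<and> y < b" by (auto simp: lift_def)
    qed
    then show "z \<in> lift (cl t)" unfolding lift_def by (subst zl) (rule imageI)
  qed
next
  show "lift (cl t) \<subseteq> prod_closure 1 (lift t)"
  proof
    fix z assume "z \<in> lift (cl t)"
    then obtain x where x: "z = [x]" "x \<in> cl t" by (auto simp: lift_def)
    show "z \<in> prod_closure 1 (lift t)" unfolding prod_closure_def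
    proof (intro CollectI conjI allI impI)
      show "length z = 1" using x by simp
      fix U assume U: "\<forall>i<1. order_open (U i) \<and> z ! i \<in> U i"
      then have "order_open (U 0)" "x \<in> U 0" using x by auto
      then obtain a b where ab: "a < x" "x < b" "{a<..<b} \<subseteq> U 0" using oo_nbhd[OF _ _ assms] by blast
      then obtain y where "y \<in> t" "a < y" "y < b" using x(2) unfolding cl_def by blast
      then show "\<exists>y\<in>lift t. \<forall>i<1. y ! i \<in> U i"
        using ab by (intro bexI[of _ "[y]"]) (auto simp: lift_def)
    qed
  qed
qed

definition tameE :: "'a::linorder set \<Rightarrow> 'a set \<Rightarrow> bool" where
  "tameE E t \<longleftrightarrow> (\<forall>l r. (\<forall>e\<in>E. \<not> (l < e \<and> e < r)) \<longrightarrow> ({l<..<r} \<subseteq> t \<or> {l<..<r} \<inter> t = {}))"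

lemma tame_compl: "tameE E t \<Longrightarrow> tameE E (- t)"
  unfolding tameE_def by blast

lemma tame_union: "tameE E1 t1 \<Longrightarrow> tameE E2 t2 \<Longrightarrow> tameE (E1 \<union> E2) (t1 \<union> t2)"
proof -
  assume a: "tameE E1 t1" "tameE E2 t2"
  show ?thesis unfolding tameE_def
  proof (intro allI impI)
    fix l r assume n: "\<forall>e\<in>E1 \<union> E2. \<not> (l < e \<and> e < r)"
    then have "{l<..<r} \<subseteq> t1 \<or> {l<..<r} \<inter> t1 = {}" "{l<..<r} \<subseteq> t2 \<or> {l<..<r} \<inter> t2 = {}"
      using a unfolding tameE_def by blast+
    then show "{l<..<r} \<subseteq> t1 \<union> t2 \<or> {l<..<r} \<inter> (t1 \<union> t2) = {}" by blast
  qed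
qed

lemma tame_single:
  fixes I :: "'a::linorder set"
  assumes "interval_or_point I"
  shows "\<exists>E. finite E \<and> tameE E I"
  using assms unfolding interval_or_point_def
proof (elim disjE exE)
  fix a assume "I = {a}"
  then show ?thesis by (intro exI[of _ "{a}"]) (auto simp: tameE_def)
next
  fix a b assume I: "I = {a<..<b}"
  have "tameE {a, b} I" unfolding tameE_def
  proof (intro allI impI)
    fix l r assume n: "\<forall>e\<in>{a, b}. \<not> (l < e \<and> e < r)"
    show "{l<..<r} \<subseteq> I \<or> {l<..<r} \<inter> I = {}"
    proof (cases "{l<..<r} \<inter> I = {}")
      case False
      then obtain z where z: "l < z" "z < r" "a < z" "z < b" using I by auto
      have "{l<..<r} \<subseteq> I"
      proof
        fix w assume w: "w \<in> {l<..<r}"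
        have "a < w"
        proof (rule ccontr)
          assume "\<not> a < w"
          then have "l < a \<and> a < r" using w z by auto
          then show False using n by auto
        qed
        moreover have "w < b"
        proof (rule ccontr)
          assume "\<not> w < b"
          then have "l < b \<and> b < r" using w z by auto
          then show False using n by auto
        qed
        ultimately show "w \<in> I" using I by auto
      qed
      then show ?thesis by blast
    qed blast
  qed
  then show ?thesis by (intro exI[of _ "{a,b}"]) simp
next
  fix a assume I: "I = {a<..}"
  have "tameE {a} I" unfolding tameE_def
  proof (intro allI impI)
    fix l r assume n: "\<forall>e\<in>{a}. \<not> (l < e \<and> e < r)"
    show "{l<..<r} \<subseteq> I \<or> {l<..<r} \<inter> I = {}"
    proof (cases "a < r")
      case True
      then have "a \<le> l" using n by auto
      then show ?thesis using I by auto
    next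
      case False
      then show ?thesis using I by auto
    qed
  qed
  then show ?thesis by (intro exI[of _ "{a}"]) simp
next
  fix b assume I: "I = {..<b}"
  have "tameE {b} I" unfolding tameE_def
  proof (intro allI impI)
    fix l r assume n: "\<forall>e\<in>{b}. \<not> (l < e \<and> e < r)"
    show "{l<..<r} \<subseteq> I \<or> {l<..<r} \<inter> I = {}"
    proof (cases "l < b")
      case True
      then have "r \<le> b" using n by auto
      then show ?thesis using I by auto
    next
      case False
      then show ?thesis using I by auto
    qed
  qed
  then show ?thesis by (intro exI[of _ "{b}"]) simp
next
  assume "I = UNIV"
  then show ?thesis by (intro exI[of _ "{}"]) (auto simp: tameE_def)
qed

lemma tame_finite:
  fixes F :: "'a::linorder set set"
  assumes "finite F" "\<forall>I\<in>F. interval_or_point I"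
  shows "\<exists>E. finite E \<and> tameE E (\<Union>F)"
  using assms
proof (induction rule: finite_induct)
  case empty then show ?case by (intro exI[of _ "{}"]) (auto simp: tameE_def)
next
  case (insert I F)
  then obtain E1 E2 where "finite E1" "tameE E1 I" "finite E2" "tameE E2 (\<Union>F)"
    using tame_single by (metis insertCI)
  then show ?case using tame_union[of E1 I E2 "\<Union>F"] by (intro exI[of _ "E1 \<union> E2"]) auto
qed


lemma walk:
  fixes t :: "'a::linorder set"
  assumes dense: "\<And>a b::'a. a < b \<Longrightarrow> \<exists>z. a < z \<and> z < b"
    and fE: "finite E" and tE: "tameE E t"
  shows "u < v \<Longrightarrow> u \<in> t \<Longrightarrow> v \<notin> t \<Longrightarrow> \<exists>p. u \<le> p \<and> p \<le> v \<and> p \<in> cl t \<and> p \<in> cl (- t)"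
proof (induction "card {e\<in>E. u < e \<and> e < v}" arbitrary: u rule: less_induct)
  case less
  define Q where "Q = {e\<in>E. u < e \<and> e < v} \<union> {v}"
  have fQ: "finite Q" "Q \<noteq> {}" using fE by (auto simp: Q_def)
  define q where "q = Min Q"
  have qQ: "q \<in> Q" using fQ by (simp add: q_def)
  have qmin: "\<And>e. e \<in> Q \<Longrightarrow> q \<le> e" using fQ by (simp add: q_def)
  have uq: "u < q" "q \<le> v" using qQ less.prems qmin[of v] by (auto simp: Q_def)
  have noE: "\<forall>e\<in>E. \<not> (u < e \<and> e < q)"
  proof (intro ballI notI)
    fix e assume "e \<in> E" "u < e \<and> e < q"
    then have "e \<in> Q" using uq by (auto simp: Q_def)
    then show False using qmin[of e] \<open>u < e \<and> e < q\<close> by auto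
  qed
  then have "{u<..<q} \<subseteq> t \<or> {u<..<q} \<inter> t = {}" using tE unfolding tameE_def by blast
  then show ?case
  proof
    assume sub: "{u<..<q} \<subseteq> t"
    show ?case
    proof (cases "q \<in> t")
      case False
      have "q \<in> cl t" unfolding cl_def
      proof (intro CollectI allI impI)
        fix a b assume ab: "a < q \<and> q < b"
        then have "max a u < q" using uq by auto
        then obtain z where "max a u < z" "z < q" using dense by blast
        then show "\<exists>y\<in>t. a < y \<and> y < b" using sub ab by (intro bexI[of _ z]) auto
      qed
      moreover have "q \<in> cl (- t)" unfolding cl_def using False by blast
      ultimately show ?thesis using uq by (intro exI[of _ q]) auto
    next
      case True
      then have "q \<noteq> v" using less.prems by auto
      then have qv: "q < v" "q \<in> E" using uq qQ by (auto simp: Q_def)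
      have "{e\<in>E. q < e \<and> e < v} \<subset> {e\<in>E. u < e \<and> e < v}"
        using qv uq by auto
      then have "card {e\<in>E. q < e \<and> e < v} < card {e\<in>E. u < e \<and> e < v}"
        using fE by (intro psubset_card_mono) auto
      then obtain p where "q \<le> p \<and> p \<le> v \<and> p \<in> cl t \<and> p \<in> cl (- t)"
        using less.hyps[OF _ qv(1) True less.prems(3)] by blast
      then show ?thesis using uq by (intro exI[of _ p]) auto
    qed
  next
    assume dis: "{u<..<q} \<inter> t = {}"
    have "u \<in> cl t" unfolding cl_def using less.prems by blast
    moreover have "u \<in> cl (- t)" unfolding cl_def
    proof (intro CollectI allI impI)
      fix a b assume ab: "a < u \<and> u < b"
      then have "u < min b q" using uq by auto
      then obtain z where "u < z" "z < min b q" using dense by blast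
      then show "\<exists>y\<in>- t. a < y \<and> y < b" using dis ab by (intro bexI[of _ z]) auto
    qed
    ultimately show ?thesis using uq by (intro exI[of _ u]) auto
  qed
qed

lemma const:
  fixes t :: "'a::linorder set"
  assumes dense: "\<And>a b::'a. a < b \<Longrightarrow> \<exists>z. a < z \<and> z < b"
    and fE: "finite E" and tE: "tameE E t"
    and uv: "u < v" and nK: "\<forall>p. u \<le> p \<and> p \<le> v \<longrightarrow> \<not> (p \<in> cl t \<and> p \<in> cl (- t))"
  shows "u \<in> t \<longleftrightarrow> v \<in> t"
proof
  assume "u \<in> t"
  then show "v \<in> t" using walk[OF dense fE tE uv] nK by blast
next
  assume "v \<in> t"
  show "u \<in> t"
  proof (rule ccontr)
    assume "u \<notin> t"
    then obtain p where "u \<le> p \<and> p \<le> v \<and> p \<in> cl (- t) \<and> p \<in> cl (- (- t))"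
      using walk[OF dense fE tame_compl[OF tE] uv] \<open>v \<in> t\<close> by auto
    then show False using nK by auto
  qed
qed

lemma K_sub:
  fixes t :: "'a::linordered_ab_group_add set" and one :: 'a
  assumes one: "0 < one" and fE: "finite E" and tE: "tameE E t"
  shows "cl t \<inter> cl (- t) \<subseteq> E"
proof
  fix x assume x: "x \<in> cl t \<inter> cl (- t)"
  show "x \<in> E"
  proof (rule ccontr)
    assume xE: "x \<notin> E"
    define l where "l = Max ({e\<in>E. e < x} \<union> {x - one})"
    define r where "r = Min ({e\<in>E. x < e} \<union> {x + one})"
    have fl: "finite ({e\<in>E. e < x} \<union> {x - one})" and fr: "finite ({e\<in>E. x < e} \<union> {x + one})"
      using fE by auto
    have lx: "l < x" unfolding l_def using fl one by (subst Max_less_iff) auto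
    have xr: "x < r" unfolding r_def using fr one by (subst Min_gr_iff) auto
    have noE: "\<forall>e\<in>E. \<not> (l < e \<and> e < r)"
    proof (intro ballI notI)
      fix e assume e: "e \<in> E" "l < e \<and> e < r"
      consider "e < x" | "e = x" | "x < e" by fastforce
      then show False
      proof cases
        case 1
        then have "e \<le> l" unfolding l_def using fl e by (intro Max_ge) auto
        then show False using e by auto
      next
        case 2 then show False using e xE by auto
      next
        case 3
        then have "r \<le> e" unfolding r_def using fr e by (intro Min_le) auto
        then show False using e by auto
      qed
    qed
    then have "{l<..<r} \<subseteq> t \<or> {l<..<r} \<inter> t = {}" using tE unfolding tameE_def by blast
    then show False
    proof
      assume "{l<..<r} \<subseteq> t"
      moreover have "\<exists>y\<in>- t. l < y \<and> y < r" using x lx xr unfolding cl_def by blast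
      ultimately show False by auto
    next
      assume "{l<..<r} \<inter> t = {}"
      moreover have "\<exists>y\<in>t. l < y \<and> y < r" using x lx xr unfolding cl_def by blast
      ultimately show False by auto
    qed
  qed
qed


definition Lt :: "'a::linorder list set" where "Lt = {[x, y] | x y. x < y}"
definition Pl :: "'a::linordered_ab_group_add list set" where "Pl = {[x, y, x + y] | x y. True}"

lemma Lt_iff[simp]: "[x, y] \<in> Lt \<longleftrightarrow> x < y" by (auto simp: Lt_def)
lemma Pl_iff[simp]: "[x, y, z] \<in> Pl \<longleftrightarrow> z = x + y" by (auto simp: Pl_def)

lemma set_len1: "{xs. length xs = Suc 0 \<and> Q xs} = lift {x. Q [x]}"
proof -
  have "xs \<in> lift {x. Q [x]}" if "length xs = Suc 0" "Q xs" for xs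
    using that by (cases xs) (auto simp: lift_def)
  then show ?thesis by (auto simp: lift_def)
qed

lemma lift_inj: "lift a = lift b \<longleftrightarrow> a = b"
  by (auto simp: lift_def)

lemma lift_mem[simp]: "[x] \<in> lift t \<longleftrightarrow> x \<in> t" by (auto simp: lift_def)

lemma lift_single: "lift {x} = {[x]}" by (simp add: lift_def)

lemma lift_Int: "lift (a \<inter> b) = lift a \<inter> lift b" by (auto simp: lift_def)
lemma lift_Un: "lift (a \<union> b) = lift a \<union> lift b" by (auto simp: lift_def)
lemma lift_Union: "lift (\<Union>G) = \<Union> (lift ` G)" by (auto simp: lift_def)

lemma half_unique:
  fixes a b :: "'a::linordered_ab_group_add"
  shows "a + a = b + b \<Longrightarrow> a = b"
proof (rule ccontr)
  assume e: "a + a = b + b" and "a \<noteq> b"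
  then consider "a < b" | "b < a" by fastforce
  then show False
  proof cases
    case 1 then have "a + a < b + b" by (intro add_strict_mono) then show False using e by simp
  next
    case 2 then have "b + b < a + a" by (intro add_strict_mono) then show False using e by simp
  qed
qed

lemma ray_or_bounded:
  fixes F :: "'a::linordered_ab_group_add set set"
  assumes "finite F" "\<forall>I\<in>F. interval_or_point I"
  shows "(\<exists>a. {a<..} \<subseteq> \<Union>F) \<or> (\<exists>B. \<forall>x\<in>\<Union>F. x \<le> B)"
  using assms
proof (induction rule: finite_induct)
  case empty then show ?case by auto
next
  case (insert I F)
  then have IH: "(\<exists>a. {a<..} \<subseteq> \<Union>F) \<or> (\<exists>B. \<forall>x\<in>\<Union>F. x \<le> B)" by auto
  have "interval_or_point I" using insert by auto
  then have "(\<exists>a. {a<..} \<subseteq> I) \<or> (\<exists>B. \<forall>x\<in>I. x \<le> B)"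
    unfolding interval_or_point_def
    apply (elim disjE exE)
    subgoal by auto
    subgoal for a b by (rule disjI2, rule exI[of _ b]) auto
    subgoal by auto
    subgoal for b by (rule disjI2, rule exI[of _ b]) auto
    subgoal by auto
    done
  then show ?case
  proof
    assume "\<exists>a. {a<..} \<subseteq> I" then show ?case by auto
  next
    assume "\<exists>B. \<forall>x\<in>I. x \<le> B"
    then obtain B1 where B1: "\<forall>x\<in>I. x \<le> B1" by blast
    from IH show ?case
    proof
      assume "\<exists>a. {a<..} \<subseteq> \<Union>F" then show ?case by auto
    next
      assume "\<exists>B. \<forall>x\<in>\<Union>F. x \<le> B"
      then obtain B2 where B2: "\<forall>x\<in>\<Union>F. x \<le> B2" by blast
      have "\<forall>x\<in>\<Union>(insert I F). x \<le> max B1 B2"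
        using B1 B2 by (auto simp: le_max_iff_disj)
      then show ?case by blast
    qed
  qed
qed

context
  fixes L :: "(nat \<times> 'a::linordered_ab_group_add list set) set" and one :: 'a
  assumes omg: "omin_group_expansion L one"
begin

lemma one_pos: "0 < one" using omg by (simp add: omin_group_expansion_def)

lemma omin: "o_minimal L" using omg by (simp add: omin_group_expansion_def)

lemma def_Lt: "definable_over L A 2 Lt"
  by (rule def_basic) (use omg in \<open>auto simp: omin_group_expansion_def Lt_def\<close>)

lemma def_Pl: "definable_over L A 3 Pl"
  by (rule def_basic) (use omg in \<open>auto simp: omin_group_expansion_def Pl_def\<close>)

lemma def_zero: "definable_over L A 1 {[0]}"
  by (rule def_basic) (use omg in \<open>auto simp: omin_group_expansion_def\<close>)

lemma def_one: "definable_over L A 1 {[one]}"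
  by (rule def_basic) (use omg in \<open>auto simp: omin_group_expansion_def\<close>)

lemma def_Lt_S: "definable_over L A (Suc (Suc 0)) Lt" using def_Lt by (simp add: numeral_2_eq_2)
lemma def_Pl_S: "definable_over L A (Suc (Suc (Suc 0))) Pl" using def_Pl by (simp add: numeral_3_eq_3)
lemma def_zero_S: "definable_over L A (Suc 0) {[0]}" using def_zero by simp
lemma def_one_S: "definable_over L A (Suc 0) {[one]}" using def_one by simp

lemma omin_rep:
  assumes "definable_over L UNIV 1 S"
  shows "\<exists>F. finite F \<and> (\<forall>I\<in>F. interval_or_point I) \<and> {x. [x] \<in> S} = \<Union>F"
  using omin assms unfolding o_minimal_def by blast

lemma div2: "\<exists>y. y + y = (x::'a)"
proof -
  let ?D = "{xs. length xs = 1 \<and> ev xs (Ex (In (Pl::'a list set) [1,1,0]))}"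
  have dD: "definable_over L UNIV 1 ?D"
    apply (rule fm_def)
    apply simp
    apply (simp add: def_Pl_S)
    done
  obtain F where F: "finite F" "\<forall>I\<in>F. interval_or_point I" "{x. [x] \<in> ?D} = \<Union>F"
    using omin_rep[OF dD] by blast
  have D: "{x. [x] \<in> ?D} = {x. \<exists>y. x = y + y}" by auto
  have U: "\<Union>F = {x. \<exists>y. x = y + y}" using F(3) D by simp
  have "(\<exists>a. {a<..} \<subseteq> \<Union>F) \<or> (\<exists>B. \<forall>x\<in>\<Union>F. x \<le> B)" using ray_or_bounded[OF F(1) F(2)] .
  moreover have False if "\<forall>x\<in>\<Union>F. x \<le> B" for B
  proof -
    define y where "y = max B 0 + one"
    have "max B 0 < y" unfolding y_def using one_pos by (simp add: less_add_same_cancel1)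
    then have yB: "B < y" "0 < y" by auto
    then have "y \<le> y + y" by (simp add: le_add_same_cancel1)
    then have "B < y + y" by (rule order_less_le_trans[OF yB(1)])
    moreover have "y + y \<in> \<Union>F" unfolding U by blast
    ultimately show False using that by force
  qed
  ultimately obtain a where a: "{a<..} \<subseteq> \<Union>F" by blast
  define y where "y = max (a - x) 0 + one"
  have "max (a - x) 0 < y" unfolding y_def using one_pos by (simp add: less_add_same_cancel1)
  then have yB: "a - x < y" "0 < y" by auto
  then have "y \<le> y + y" by (simp add: le_add_same_cancel1)
  then have "a - x < y + y" by (rule order_less_le_trans[OF yB(1)])
  then have "a < x + (y + y)" by (simp add: diff_less_eq add.commute)
  then have "x + (y + y) \<in> \<Union>F" using a by auto
  then obtain w where "x + (y + y) = w + w" unfolding U by auto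
  then have "(w - y) + (w - y) = x" by (simp add: algebra_simps)
  then show ?thesis by blast
qed

lemma dense: "a < (b::'a) \<Longrightarrow> \<exists>z. a < z \<and> z < b"
proof -
  assume ab: "a < b"
  obtain z where z: "z + z = a + b" using div2 by blast
  have "a < z"
  proof (rule ccontr)
    assume "\<not> a < z"
    then have "z + z \<le> a + a" by (intro add_mono) auto
    moreover have "a + a < a + b" using ab by simp
    ultimately show False using z by simp
  qed
  moreover have "z < b"
  proof (rule ccontr)
    assume "\<not> z < b"
    then have "b + b \<le> z + z" by (intro add_mono) auto
    moreover have "a + b < b + b" using ab by simp
    ultimately show False using z by simp
  qed
  ultimately show ?thesis by blast
qed

end


lemma set_len1': "{xs. length xs = 1 \<and> Q xs} = lift {x. Q [x]}"
  using set_len1[of Q] by simp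

lemma mid:
  fixes a b z :: "'a::linordered_ab_group_add"
  assumes ab: "a < b" and z: "z + z = a + b"
  shows "a < z \<and> z < b"
proof -
  have "a < z"
  proof (rule ccontr)
    assume "\<not> a < z"
    then have "z + z \<le> a + a" by (intro add_mono) auto
    moreover have "a + a < a + b" using ab by simp
    ultimately show False using z by simp
  qed
  moreover have "z < b"
  proof (rule ccontr)
    assume "\<not> z < b"
    then have "b + b \<le> z + z" by (intro add_mono) auto
    moreover have "a + b < b + b" using ab by simp
    ultimately show False using z by simp
  qed
  ultimately show ?thesis by blast
qed

lemma def_Suc0[simp]: "definable_over L A 1 S \<longleftrightarrow> definable_over L A (Suc 0) S" by simp

lemma fm_def1: "ok L A 1 \<phi> \<Longrightarrow> definable_over L A 1 (lift {x. ev [x] \<phi>})"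
  using fm_def[of L A 1 \<phi>] by (simp only: set_len1')

definition Iv :: "'a::linorder option \<Rightarrow> 'a option \<Rightarrow> 'a set" where
  "Iv o1 o2 = {y. (\<forall>l. o1 = Some l \<longrightarrow> l < y) \<and> (\<forall>h. o2 = Some h \<longrightarrow> y < h)}"

context
  fixes L :: "(nat \<times> 'a::linordered_ab_group_add list set) set" and one :: 'a
  assumes omg: "omin_group_expansion L one"
begin

lemma fin_sing:
  assumes "finite K" "definable_over L C 1 (lift K)"
  shows "\<forall>k\<in>K. definable_over L C 1 {[k]}"
  using assms
proof (induction "card K" arbitrary: K rule: less_induct)
  case less
  show ?case
  proof (cases "K = {}")
    case True then show ?thesis by simp
  next
    case False
    define m where "m = Min K"
    have mK: "m \<in> K" and mle: "\<forall>k\<in>K. m \<le> k" using Min_in[OF less.prems(1) False] Min_le[OF less.prems(1)] unfolding m_def by blast+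
    have dm: "definable_over L C 1 {[m]}"
    proof -
      have "definable_over L C 1 (lift {x. ev [x] (Conj (In (lift K) [0]) (Neg (Ex (Conj (In (lift K) [1]) (In Lt [1,0])))))})"
        by (rule fm_def1) (use less.prems in \<open>simp add: def_Lt_S[OF omg]\<close>)
      moreover have "{x. ev [x] (Conj (In (lift K) [0]) (Neg (Ex (Conj (In (lift K) [1]) (In Lt [1,0])))))} = {m}"
      proof -
        have "{x. x \<in> K \<and> \<not> (\<exists>y. y \<in> K \<and> y < x)} = {m}"
          using mK mle by (auto simp: not_less) (meson antisym not_le)
        then show ?thesis by simp
      qed
      ultimately show ?thesis by (simp add: lift_single)
    qed
    define K' where "K' = K - {m}"
    have dK': "definable_over L C 1 (lift K')"
    proof -
      have "definable_over L C 1 (lift {x. ev [x] (Conj (In (lift K) [0]) (Neg (In {[m]} [0])))})"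
        by (rule fm_def1) (use less.prems dm in simp)
      moreover have "{x. ev [x] (Conj (In (lift K) [0]) (Neg (In {[m]} [0])))} = K'"
        by (auto simp: K'_def)
      ultimately show ?thesis by simp
    qed
    have "card K' < card K" unfolding K'_def by (rule card_Diff1_less[OF less.prems(1) mK])
    then have "\<forall>k\<in>K'. definable_over L C 1 {[k]}"
      using less.hyps[of K'] less.prems(1) dK' by (simp add: K'_def)
    then show ?thesis using dm by (auto simp: K'_def)
  qed
qed

lemma def_lift_univ: "definable_over L C 1 (lift UNIV)"
proof -
  have "definable_over L C 1 (lift {x. ev [x] Tru})" by (rule fm_def1) simp
  then show ?thesis by simp
qed

lemma def_Iv:
  assumes o1: "\<forall>l. o1 = Some l \<longrightarrow> definable_over L C 1 {[l]}"
    and o2: "\<forall>h. o2 = Some h \<longrightarrow> definable_over L C 1 {[h]}"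
  shows "definable_over L C 1 (lift (Iv o1 o2))"
proof -
  have d1: "definable_over L C 1 (lift {y. \<forall>l. o1 = Some l \<longrightarrow> l < y})"
  proof (cases o1)
    case None then show ?thesis using def_lift_univ by simp
  next
    case (Some l)
    then have "definable_over L C (Suc 0) {[l]}" using o1 by simp
    then have "definable_over L C 1 (lift {x. ev [x] (Ex (Conj (In {[l]} [1]) (In Lt [1,0])))})"
      by (intro fm_def1) (simp add: def_Lt_S[OF omg])
    then show ?thesis using Some by simp
  qed
  have d2: "definable_over L C 1 (lift {y. \<forall>h. o2 = Some h \<longrightarrow> y < h})"
  proof (cases o2)
    case None then show ?thesis using def_lift_univ by simp
  next
    case (Some h)
    then have "definable_over L C (Suc 0) {[h]}" using o2 by simp
    then have "definable_over L C 1 (lift {x. ev [x] (Ex (Conj (In {[h]} [1]) (In Lt [0,1])))})"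
      by (intro fm_def1) (simp add: def_Lt_S[OF omg])
    then show ?thesis using Some by simp
  qed
  have "Iv o1 o2 = {y. \<forall>l. o1 = Some l \<longrightarrow> l < y} \<inter> {y. \<forall>h. o2 = Some h \<longrightarrow> y < h}"
    by (auto simp: Iv_def)
  then show ?thesis using def_inter[OF d1 d2] by (simp add: lift_Int)
qed

lemma pick_Iv:
  assumes o1: "\<forall>l. o1 = Some l \<longrightarrow> definable_over L C 1 {[l]}"
    and o2: "\<forall>h. o2 = Some h \<longrightarrow> definable_over L C 1 {[h]}"
    and ne: "Iv o1 o2 \<noteq> {}"
  shows "\<exists>z\<in>Iv o1 o2. definable_over L C 1 {[z]}"
proof (cases o1)
  case None
  note N1 = None
  show ?thesis
  proof (cases o2)
    case None
    then show ?thesis using N1 def_zero[OF omg] by (intro bexI[of _ 0]) (auto simp: Iv_def)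
  next
    case (Some h)
    then have dh: "definable_over L C (Suc 0) {[h]}" using o2 by simp
    have "definable_over L C 1 (lift {x. ev [x] (Ex (Ex (Conj (In {[h]} [1]) (Conj (In {[one]} [2]) (In Pl [0,2,1])))))})"
      by (intro fm_def1) (simp add: dh def_Pl_S[OF omg] def_one_S[OF omg])
    moreover have "{x. \<exists>a b. a = h \<and> b = one \<and> a = x + b} = {h - one}" by (auto simp: algebra_simps)
    ultimately have "definable_over L C 1 {[h - one]}" by (simp add: lift_single)
    moreover have "h - one \<in> Iv o1 o2" using N1 Some one_pos[OF omg] by (simp add: Iv_def)
    ultimately show ?thesis by blast
  qed
next
  case (Some l)
  note S1 = Some
  then have dl: "definable_over L C (Suc 0) {[l]}" using o1 by simp
  show ?thesis
  proof (cases o2)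
    case None
    have "definable_over L C 1 (lift {x. ev [x] (Ex (Ex (Conj (In {[l]} [1]) (Conj (In {[one]} [2]) (In Pl [1,2,0])))))})"
      by (intro fm_def1) (simp add: dl def_Pl_S[OF omg] def_one_S[OF omg])
    moreover have "{x. \<exists>a b. a = l \<and> b = one \<and> x = a + b} = {l + one}" by auto
    ultimately have "definable_over L C 1 {[l + one]}" by (simp add: lift_single)
    moreover have "l + one \<in> Iv o1 o2" using None S1 one_pos[OF omg] by (simp add: Iv_def)
    ultimately show ?thesis by blast
  next
    case (Some h)
    then have dh: "definable_over L C (Suc 0) {[h]}" using o2 by simp
    have lh: "l < h" using ne S1 Some by (auto simp: Iv_def)
    obtain z where z: "z + z = l + h" using div2[OF omg] by blast
    have "definable_over L C 1 (lift {x. ev [x] (Ex (Ex (Ex (Conj (In {[l]} [1]) (Conj (In {[h]} [2]) (Conj (In Pl [1,2,3]) (In Pl [0,0,3])))))))})"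
      by (intro fm_def1) (simp add: dl dh def_Pl_S[OF omg])
    moreover have "{x. \<exists>a b w. a = l \<and> b = h \<and> w = a + b \<and> w = x + x} = {z}"
    proof -
      have e: "x + x = l + h \<longleftrightarrow> x = z" for x
      proof
        assume "x + x = l + h"
        then have "x + x = z + z" using z by simp
        then show "x = z" by (rule half_unique)
      qed (use z in simp)
      have "{x. \<exists>a b w. a = l \<and> b = h \<and> w = a + b \<and> w = x + x} = {x. x + x = l + h}" by auto
      also have "\<dots> = {z}" by (simp only: e) simp
      finally show ?thesis .
    qed
    ultimately have "definable_over L C 1 {[z]}" by (simp add: lift_single)
    moreover have "z \<in> Iv o1 o2" using S1 Some mid[OF lh z] by (simp add: Iv_def)
    ultimately show ?thesis by blast
  qed
qed

end


context
  fixes L :: "(nat \<times> 'a::linordered_ab_group_add list set) set" and one :: 'a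
    and P C :: "'a set"
  assumes omg: "omin_group_expansion L one"
    and OP: "OP L P" and ind: "dcl_indep L (C - P) P"
begin

lemma one_dim:
  assumes dU: "definable_over L UNIV 1 S" and dE: "definable_over (expand L P) C 1 S"
  shows "definable_over L C 1 S \<and> (S \<noteq> {} \<longrightarrow> (\<exists>y. [y] \<in> S \<and> definable_over L C 1 {[y]}))"
proof -
  define s where "s = {x. [x] \<in> S}"
  have S: "S = lift s"
  proof
    show "S \<subseteq> lift s"
    proof
      fix xs assume xs: "xs \<in> S"
      then have "length xs = Suc 0" using def_len[OF dU] by simp
      then obtain x where x: "xs = [x]" by (cases xs) auto
      then show "xs \<in> lift s" using xs by (simp add: s_def)
    qed
    show "lift s \<subseteq> S" by (auto simp: s_def lift_def)
  qed
  have one: "0 < one" by (rule one_pos[OF omg])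
  have dense': "\<And>a b::'a. a < b \<Longrightarrow> \<exists>z. a < z \<and> z < b" using dense[OF omg] by blast
  obtain F where F: "finite F" "\<forall>I\<in>F. interval_or_point I" "{x. [x] \<in> S} = \<Union>F"
    using omin_rep[OF omg dU] by blast
  have sF: "s = \<Union>F" using F(3) by (simp add: s_def)
  obtain E where E: "finite E" "tameE E s" using tame_finite[OF F(1) F(2)] sF by auto
  have OPr: "\<And>V. definable_over (expand L P) C 1 V \<Longrightarrow> definable_over L C 1 (prod_closure 1 V)"
    using OP ind unfolding OP_def by blast
  have c1: "definable_over L C 1 (lift (cl s))"
    using OPr[OF dE] unfolding S closure_lift[OF one] .
  have ls: "{xs. length xs = 1} - S = lift (- s)"
  proof
    show "{xs. length xs = 1} - S \<subseteq> lift (- s)"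
    proof
      fix xs assume xs: "xs \<in> {xs. length xs = 1} - S"
      then have "length xs = Suc 0" by simp
      then obtain x where x: "xs = [x]" by (cases xs) auto
      then show "xs \<in> lift (- s)" using xs by (simp add: s_def)
    qed
    show "lift (- s) \<subseteq> {xs. length xs = 1} - S" by (auto simp: s_def lift_def)
  qed
  have dEc: "definable_over (expand L P) C 1 (lift (- s))" using def_compl[OF dE] ls by simp
  have c2: "definable_over L C 1 (lift (cl (- s)))"
    using OPr[OF dEc] unfolding closure_lift[OF one] .
  define K where "K = cl s \<inter> cl (- s)"
  have dK: "definable_over L C 1 (lift K)" using def_inter[OF c1 c2] by (simp add: K_def lift_Int)
  have fK: "finite K" using K_sub[OF one E(1) E(2)] E(1) finite_subset unfolding K_def by blast
  have sing: "\<forall>k\<in>K. definable_over L C 1 {[k]}" by (rule fin_sing[OF omg fK dK])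
  define lo where "lo x = (if \<exists>k\<in>K. k < x then Some (Max {k\<in>K. k < x}) else None)" for x
  define hi where "hi x = (if \<exists>k\<in>K. x < k then Some (Min {k\<in>K. x < k}) else None)" for x
  define Opt where "Opt = insert None (Some ` K)"
  have fin1: "finite {k\<in>K. k < x}" "finite {k\<in>K. x < k}" for x using fK by auto
  have loO: "lo x \<in> Opt" for x
  proof (cases "\<exists>k\<in>K. k < x")
    case True
    then have "{k\<in>K. k < x} \<noteq> {}" by blast
    then have "Max {k\<in>K. k < x} \<in> K" using Max_in[OF fin1(1)] by blast
    then show ?thesis using True by (simp add: lo_def Opt_def)
  qed (simp add: lo_def Opt_def)
  have hiO: "hi x \<in> Opt" for x
  proof (cases "\<exists>k\<in>K. x < k")
    case True
    then have "{k\<in>K. x < k} \<noteq> {}" by blast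
    then have "Min {k\<in>K. x < k} \<in> K" using Min_in[OF fin1(2)] by blast
    then show ?thesis using True by (simp add: hi_def Opt_def)
  qed (simp add: hi_def Opt_def)
  have xIv: "x \<in> Iv (lo x) (hi x)" for x
  proof -
    have "\<forall>l. lo x = Some l \<longrightarrow> l < x"
    proof (intro allI impI)
      fix l assume "lo x = Some l"
      then have ex: "\<exists>k\<in>K. k < x" and l: "l = Max {k\<in>K. k < x}" by (auto simp: lo_def split: if_splits)
      have ne: "{k\<in>K. k < x} \<noteq> {}" using ex by blast
      have "Max {k\<in>K. k < x} < x" by (subst Max_less_iff[OF fin1(1) ne]) blast
      then show "l < x" using l by simp
    qed
    moreover have "\<forall>h. hi x = Some h \<longrightarrow> x < h"
    proof (intro allI impI)
      fix h assume "hi x = Some h"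
      then have ex: "\<exists>k\<in>K. x < k" and h: "h = Min {k\<in>K. x < k}" by (auto simp: hi_def split: if_splits)
      have ne: "{k\<in>K. x < k} \<noteq> {}" using ex by blast
      have "x < Min {k\<in>K. x < k}" by (subst Min_gr_iff[OF fin1(2) ne]) blast
      then show "x < h" using h by simp
    qed
    ultimately show ?thesis by (simp add: Iv_def)
  qed
  have comp: "y \<in> s \<longleftrightarrow> x \<in> s" if xK: "x \<notin> K" and y: "y \<in> Iv (lo x) (hi x)" for x y
  proof -
    consider "y = x" | "y < x" | "x < y" by fastforce
    then show ?thesis
    proof cases
      case 1 then show ?thesis by simp
    next
      case 2
      have nK: "\<forall>p. y \<le> p \<and> p \<le> x \<longrightarrow> \<not> (p \<in> cl s \<and> p \<in> cl (- s))"
      proof (intro allI impI notI)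
        fix p assume p: "y \<le> p \<and> p \<le> x" "p \<in> cl s \<and> p \<in> cl (- s)"
        then have pK: "p \<in> K" by (simp add: K_def)
        then have "p < x" using p xK by (metis order_le_less)
        then have ex: "\<exists>k\<in>K. k < x" using pK by blast
        then have lx: "lo x = Some (Max {k\<in>K. k < x})" by (simp add: lo_def)
        have "p \<le> Max {k\<in>K. k < x}" using fin1(1)[of x] pK \<open>p < x\<close> by (intro Max_ge) auto
        moreover have "Max {k\<in>K. k < x} < y" using y lx by (simp add: Iv_def)
        ultimately show False using p(1) by (metis leD order_trans)
      qed
      show ?thesis using const[OF dense' E(1) E(2) 2 nK] .
    next
      case 3
      have nK: "\<forall>p. x \<le> p \<and> p \<le> y \<longrightarrow> \<not> (p \<in> cl s \<and> p \<in> cl (- s))"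
      proof (intro allI impI notI)
        fix p assume p: "x \<le> p \<and> p \<le> y" "p \<in> cl s \<and> p \<in> cl (- s)"
        then have pK: "p \<in> K" by (simp add: K_def)
        then have "x < p" using p xK by (metis order_le_less)
        then have ex: "\<exists>k\<in>K. x < k" using pK by blast
        then have hx: "hi x = Some (Min {k\<in>K. x < k})" by (simp add: hi_def)
        have "Min {k\<in>K. x < k} \<le> p" using fin1(2)[of x] pK \<open>x < p\<close> by (intro Min_le) auto
        moreover have "y < Min {k\<in>K. x < k}" using y hx by (simp add: Iv_def)
        ultimately show False using p(1) by (metis leD order_trans)
      qed
      show ?thesis using const[OF dense' E(1) E(2) 3 nK] by simp
    qed
  qed
  have optd: "\<forall>l. o1 = Some l \<longrightarrow> definable_over L C 1 {[l]}" if "o1 \<in> Opt" for o1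
    using that sing by (auto simp: Opt_def)
  have Ivd: "definable_over L C 1 (lift (Iv o1 o2))" if "o1 \<in> Opt" "o2 \<in> Opt" for o1 o2
    by (rule def_Iv[OF omg optd[OF that(1)] optd[OF that(2)]])
  have dec: "s = (s \<inter> K) \<union> \<Union>((\<lambda>x. Iv (lo x) (hi x)) ` (s - K))"
  proof
    show "s \<subseteq> (s \<inter> K) \<union> \<Union>((\<lambda>x. Iv (lo x) (hi x)) ` (s - K))"
    proof
      fix x assume "x \<in> s"
      then show "x \<in> (s \<inter> K) \<union> \<Union>((\<lambda>x. Iv (lo x) (hi x)) ` (s - K))"
        using xIv[of x] by (cases "x \<in> K") auto
    qed
    show "(s \<inter> K) \<union> \<Union>((\<lambda>x. Iv (lo x) (hi x)) ` (s - K)) \<subseteq> s"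
      using comp by auto
  qed
  have "lift s = lift ((s \<inter> K) \<union> \<Union>((\<lambda>x. Iv (lo x) (hi x)) ` (s - K)))"
    using dec by (rule arg_cong)
  also have "\<dots> = \<Union>((\<lambda>k. {[k]}) ` (s \<inter> K)) \<union> \<Union>((\<lambda>x. lift (Iv (lo x) (hi x))) ` (s - K))"
    by (auto simp: lift_def)
  finally have ldec: "lift s = \<Union>((\<lambda>k. {[k]}) ` (s \<inter> K)) \<union> \<Union>((\<lambda>x. lift (Iv (lo x) (hi x))) ` (s - K))" .
  have d1: "definable_over L C 1 (\<Union>((\<lambda>k. {[k]}) ` (s \<inter> K)))"
    by (rule def_Union) (use fK sing in auto)
  have fam: "(\<lambda>x. lift (Iv (lo x) (hi x))) ` (s - K) \<subseteq> (\<lambda>(o1, o2). lift (Iv o1 o2)) ` (Opt \<times> Opt)"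
    using loO hiO by fast
  have "finite ((\<lambda>(o1, o2). lift (Iv o1 o2)) ` (Opt \<times> Opt))" using fK by (simp add: Opt_def)
  then have ffam: "finite ((\<lambda>x. lift (Iv (lo x) (hi x))) ` (s - K))" using fam finite_subset by blast
  have d2: "definable_over L C 1 (\<Union>((\<lambda>x. lift (Iv (lo x) (hi x))) ` (s - K)))"
    by (rule def_Union[OF ffam]) (use Ivd loO hiO in auto)
  have defS: "definable_over L C 1 S" using def_union[OF d1 d2] ldec S by simp
  have pt: "\<exists>y. [y] \<in> S \<and> definable_over L C 1 {[y]}" if ne: "S \<noteq> {}"
  proof -
    obtain x where xs: "x \<in> s" using ne S by (auto simp: lift_def)
    show ?thesis
    proof (cases "x \<in> K")
      case True then show ?thesis using xs sing S by auto
    next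
      case False
      have "Iv (lo x) (hi x) \<noteq> {}" using xIv by blast
      then obtain z where z: "z \<in> Iv (lo x) (hi x)" "definable_over L C 1 {[z]}"
        using pick_Iv[OF omg optd[OF loO] optd[OF hiO]] by blast
      then have "z \<in> s" using comp[OF False z(1)] xs by simp
      then show ?thesis using z(2) S by auto
    qed
  qed
  show ?thesis using defS pt by blast
qed


lemma L_sub: "L \<subseteq> expand L P" by (auto simp: expand_def)

lemma main_ind:
  "\<forall>B. B \<noteq> {} \<longrightarrow> definable_over L UNIV k B \<longrightarrow> definable_over (expand L P) C k B \<longrightarrow>
     (\<exists>cs\<in>B. definable_over L C k {cs})"
proof (induction k)
  case 0
  show ?case
  proof (intro allI impI)
    fix B :: "'a list set" assume ne: "B \<noteq> {}" and dU: "definable_over L UNIV 0 B"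
    have "B \<subseteq> {[]}" using def_len[OF dU] by auto
    then have "[] \<in> B" using ne by auto
    then show "\<exists>cs\<in>B. definable_over L C 0 {cs}" using def_nil by blast
  qed
next
  case (Suc k)
  show ?case
  proof (intro allI impI)
    fix B :: "'a list set" assume ne: "B \<noteq> {}" and dU: "definable_over L UNIV (Suc k) B"
      and dE: "definable_over (expand L P) C (Suc k) B"
    define B' where "B' = {xs. \<exists>y. xs @ [y] \<in> B}"
    have dU': "definable_over L UNIV k B'" unfolding B'_def by (rule def_proj[OF dU])
    have dE': "definable_over (expand L P) C k B'" unfolding B'_def by (rule def_proj[OF dE])
    obtain zs where zs: "zs \<in> B" using ne by blast
    then have "length zs = Suc k" using def_len[OF dU] by simp
    then have "zs = butlast zs @ [last zs]"
      by (metis append_butlast_last_id length_0_conv nat.simps(3))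
    then have "butlast zs \<in> B'" using zs unfolding B'_def by (metis (mono_tags, lifting) mem_Collect_eq)
    then have "B' \<noteq> {}" by blast
    then obtain cs where cs: "cs \<in> B'" "definable_over L C k {cs}" using Suc dU' dE' by blast
    have lcs: "length cs = k" using def_len[OF dU'] cs(1) by simp
    define \<phi> where "\<phi> = ExN k (Conj (In {cs} [1..<1+k]) (In B ([1..<1+k] @ [0])))"
    have evphi: "ev [y] \<phi> \<longleftrightarrow> cs @ [y] \<in> B" for y
    proof -
      have m1: "map (\<lambda>i. ([y] @ ys) ! i) [1..<1+k] = ys" if "length ys = k" for ys
        by (rule nth_equalityI) (use that in \<open>auto simp: nth_append simp del: upt_Suc\<close>)
      have "ev [y] \<phi> \<longleftrightarrow> (\<exists>ys. length ys = k \<and> ys = cs \<and> ys @ [y] \<in> B)"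
        unfolding \<phi>_def using m1 by (auto simp del: upt_Suc)
      then show ?thesis using lcs by auto
    qed
    have okU: "ok L UNIV 1 \<phi>"
      using def_mono[OF cs(2) order_refl subset_UNIV] dU lcs by (simp add: \<phi>_def del: upt_Suc)
    have okE: "ok (expand L P) C 1 \<phi>"
      using def_mono[OF cs(2) L_sub order_refl] dE lcs by (simp add: \<phi>_def del: upt_Suc)
    have FU: "definable_over L UNIV 1 (lift {y. cs @ [y] \<in> B})"
      using fm_def1[OF okU] evphi by simp
    have FE: "definable_over (expand L P) C 1 (lift {y. cs @ [y] \<in> B})"
      using fm_def1[OF okE] evphi by simp
    have "lift {y. cs @ [y] \<in> B} \<noteq> {}" using cs(1) by (auto simp: B'_def lift_def)
    then obtain y where y: "[y] \<in> lift {y. cs @ [y] \<in> B}" "definable_over L C 1 {[y]}"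
      using one_dim[OF FU FE] by blast
    then have yB: "cs @ [y] \<in> B" by simp
    define \<psi> where "\<psi> = Conj (In {cs} [0..<k]) (In {[y]} [k])"
    have okC: "ok L C (Suc k) \<psi>" using cs(2) y(2) lcs by (simp add: \<psi>_def)
    have "{xs. length xs = Suc k \<and> ev xs \<psi>} = {cs @ [y]}"
    proof
      show "{xs. length xs = Suc k \<and> ev xs \<psi>} \<subseteq> {cs @ [y]}"
      proof
        fix xs assume xs: "xs \<in> {xs. length xs = Suc k \<and> ev xs \<psi>}"
        then have l: "length xs = Suc k" and m: "map (\<lambda>i. xs ! i) [0..<k] = cs" and yy: "xs ! k = y"
          by (auto simp: \<psi>_def)
        have "take k xs = map (\<lambda>i. xs ! i) [0..<k]"
          by (rule nth_equalityI) (use l in auto)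
        then have "take k xs = cs" using m by simp
        moreover have "xs = take k xs @ [xs ! k]" using l
          by (metis lessI take_Suc_conv_app_nth take_all order_refl)
        ultimately show "xs \<in> {cs @ [y]}" using yy by simp
      qed
      show "{cs @ [y]} \<subseteq> {xs. length xs = Suc k \<and> ev xs \<psi>}"
      proof -
        have "map (\<lambda>i. (cs @ [y]) ! i) [0..<k] = cs"
          by (rule nth_equalityI) (use lcs in \<open>auto simp: nth_append\<close>)
        moreover have "(cs @ [y]) ! k = y" using lcs by (simp add: nth_append)
        ultimately show ?thesis using lcs by (simp add: \<psi>_def)
      qed
    qed
    then have "definable_over L C (Suc k) {cs @ [y]}" using fm_def[OF okC] by simp
    then show "\<exists>cs\<in>B. definable_over L C (Suc k) {cs}" using yB by blast
  qed
qed

end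

lemma Bdef:
  assumes Y: "fodef L0 (n + m) Y" and sub: "L0 \<subseteq> L'" and X: "definable_over L' A n X"
  shows "definable_over L' A m {cs. length cs = m \<and> (\<forall>xs. length xs = n \<longrightarrow> (xs @ cs \<in> Y \<longleftrightarrow> xs \<in> X))}"
proof -
  define \<phi> where "\<phi> = Neg (ExN n (Neg (Iff (In Y ([m..<m+n] @ [0..<m])) (In X [m..<m+n]))))"
  have dY: "definable_over L' A (n + m) Y" using fodef_def[OF fodef_mono[OF Y sub]] .
  have ok: "ok L' A m \<phi>" using dY X by (auto simp: \<phi>_def)
  have mA: "map (\<lambda>i. (cs @ ys) ! i) [m..<m+n] = ys" if "length cs = m" "length ys = n" for cs ys :: "'b list"
    by (rule nth_equalityI) (use that in \<open>auto simp: nth_append\<close>)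
  have mB: "map (\<lambda>i. (cs @ ys) ! i) [0..<m] = cs" if "length cs = m" for cs ys :: "'b list"
    by (rule nth_equalityI) (use that in \<open>auto simp: nth_append\<close>)
  have e1: "ev (cs @ ys) (Iff (In Y ([m..<m+n] @ [0..<m])) (In X [m..<m+n])) \<longleftrightarrow> (ys @ cs \<in> Y \<longleftrightarrow> ys \<in> X)"
    if "length cs = m" "length ys = n" for cs ys
  proof -
    have "map (\<lambda>i. (cs @ ys) ! i) ([m..<m+n] @ [0..<m]) = ys @ cs"
      using mA[OF that] mB[OF that(1)] by (simp only: map_append)
    then show ?thesis using mA[OF that] by simp
  qed
  have e2: "ev cs \<phi> \<longleftrightarrow> (\<forall>xs. length xs = n \<longrightarrow> (xs @ cs \<in> Y \<longleftrightarrow> xs \<in> X))" if "length cs = m" for cs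
  proof -
    have "ev cs \<phi> \<longleftrightarrow> \<not> (\<exists>ys. length ys = n \<and> \<not> ev (cs @ ys) (Iff (In Y ([m..<m+n] @ [0..<m])) (In X [m..<m+n])))"
      unfolding \<phi>_def by (simp only: ev.simps ev_ExN)
    also have "\<dots> \<longleftrightarrow> (\<forall>xs. length xs = n \<longrightarrow> (xs @ cs \<in> Y \<longleftrightarrow> xs \<in> X))"
      using e1[OF that] by blast
    finally show ?thesis .
  qed
  have "{cs. length cs = m \<and> ev cs \<phi>} = {cs. length cs = m \<and> (\<forall>xs. length xs = n \<longrightarrow> (xs @ cs \<in> Y \<longleftrightarrow> xs \<in> X))}"
    using e2 by auto
  then show ?thesis using fm_def[OF ok] by simp
qed


lemma expand_sub: "L \<subseteq> expand L P" by (auto simp: expand_def)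

theorem lemma3p2:
  fixes L :: "(nat \<times> 'a::linordered_ab_group_add list set) set"
    and one :: 'a and P C :: "'a set" and n :: nat and X :: "'a list set"
  assumes "omin_group_expansion L one"
    and "OP L P"
    and "dcl_indep L (C - P) P"
    and "definable_over L UNIV n X"
    and "definable_over (expand L P) C n X"
  shows "definable_over L C n X"
proof -
  obtain m Y bs where Y: "fodef L (n+m) Y" "length bs = m" "X = {xs. length xs = n \<and> xs @ bs \<in> Y}"
    using assms(4) unfolding definable_over_def by blast
  define B where "B = {cs. length cs = m \<and> (\<forall>xs. length xs = n \<longrightarrow> (xs @ cs \<in> Y \<longleftrightarrow> xs \<in> X))}"
  have BU: "definable_over L UNIV m B" unfolding B_def by (rule Bdef[OF Y(1) order_refl assms(4)])
  have BE: "definable_over (expand L P) C m B" unfolding B_def by (rule Bdef[OF Y(1) expand_sub assms(5)])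
  have "bs \<in> B" using Y by (auto simp: B_def)
  then have "B \<noteq> {}" by blast
  then obtain cs where cs: "cs \<in> B" "definable_over L C m {cs}"
    using main_ind[OF assms(1,2,3), of m] BU BE by blast
  have lcs: "length cs = m" and csX: "\<And>xs. length xs = n \<Longrightarrow> (xs @ cs \<in> Y \<longleftrightarrow> xs \<in> X)"
    using cs(1) by (auto simp: B_def)
  define \<phi> where "\<phi> = ExN m (Conj (In {cs} [n..<n+m]) (In Y [0..<n+m]))"
  have dY: "definable_over L C (n + m) Y" by (rule fodef_def[OF Y(1)])
  have ok: "ok L C n \<phi>" using cs(2) dY by (auto simp: \<phi>_def)
  have mA: "map (\<lambda>i. (xs @ ys) ! i) [n..<n+m] = ys" if "length xs = n" "length ys = m" for xs ys :: "'a list"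
    by (rule nth_equalityI) (use that in \<open>auto simp: nth_append\<close>)
  have mC: "map (\<lambda>i. (xs @ ys) ! i) [0..<n+m] = xs @ ys" if "length xs = n" "length ys = m" for xs ys :: "'a list"
    by (rule nth_equalityI) (use that in \<open>auto simp: nth_append\<close>)
  have e: "ev xs \<phi> \<longleftrightarrow> xs @ cs \<in> Y" if "length xs = n" for xs
  proof -
    have "ev xs \<phi> \<longleftrightarrow> (\<exists>ys. length ys = m \<and> map (\<lambda>i. (xs @ ys) ! i) [n..<n+m] \<in> {cs} \<and> map (\<lambda>i. (xs @ ys) ! i) [0..<n+m] \<in> Y)"
      unfolding \<phi>_def by (simp only: ev.simps ev_ExN)
    also have "\<dots> \<longleftrightarrow> (\<exists>ys. length ys = m \<and> ys = cs \<and> xs @ ys \<in> Y)"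
      using mA[OF that] mC[OF that] by auto
    also have "\<dots> \<longleftrightarrow> xs @ cs \<in> Y" using lcs by auto
    finally show ?thesis .
  qed
  have "{xs. length xs = n \<and> ev xs \<phi>} = X"
  proof -
    have "X \<subseteq> {xs. length xs = n}" using Y(3) by auto
    then show ?thesis using e csX by auto
  qed
  then show ?thesis using fm_def[OF ok] by simp
qed


end
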